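(* In the qubit–battery model with the "copy" interaction $$U_{SB}=|0\rangle\langle0|_S\otimes|0\rangle\langle0|_B+\sum_{n\ge1}\sum_{i,j\in\{0,1\}}V_{ij}\,|i\rangle\langle j|_S\otimes|n-i\rangle\langle n-j|_B,$$ for every normalized battery state $|\beta\rangle_B=\sum_{n\ge0}\beta_n|n\rangle_B$ one has $$\epsilon_C(\mathbf\Phi_{|\beta\rangle},\mathcal V)=|V_{01}|^2\sum_{n=1}^\infty\Big[|\beta_{n+1}-\beta_n|^2-\frac{|V_{01}|^2}{4}|\beta_{n+1}+\beta_{n-1}-2\beta_n|^2\Big]+\Delta(\beta_0,\beta_1,V_S),$$ where $$\Delta(\beta_0,\beta_1,V_S)=|\beta_0|^2+|V_{01}|^2\big(|\beta_1|^2-\mathrm{Re}[\beta_0\beta_1^*]\big)-\frac14\big|\beta_0(V_{00}^*+|V_{11}|^2)+\beta_1|V_{01}|^2\big|^2 .$$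
   Context: Qubit $S$ with energy basis $|0\rangle_S,|1\rangle_S$, $H_S=\frac\omega2(|1\rangle\langle1|-|0\rangle\langle0|)$; harmonic-oscillator battery $B$ with basis $\{|n\rangle_B\}_{n\ge0}$, $H_B=\omega\sum_n n|n\rangle\langle n|$. $V_S$ is a qubit unitary with entries $V_{ij}=\langle i|V_S|j\rangle$, $\mathcal V(\cdot)=V_S\cdot V_S^\dagger$. The channel is $\mathbf\Phi_{|\beta\rangle}(\rho)=\mathrm{Tr}_B[U_{SB}(\rho\otimes|\beta\rangle\langle\beta|_B)U_{SB}^\dagger]$ with Kraus operators $K^{(n)}={}_B\langle n|U_{SB}|\beta\rangle_B$, and the Choi infidelity is $\epsilon_C(\mathbf\Phi,\mathcal V)=1-\frac14\sum_n|\mathrm{Tr}[V_S^\dagger K^{(n)}]|^2$ (equivalently $1-F$ of the Choi states, $F$ the Uhlmann fidelity). *)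

theory Defs
  imports "HOL-Analysis.Analysis"
begin

text \<open>Qubit operators: functions nat => nat => complex, only indices 0 and 1 used
  (0 = ground state, 1 = excited state).
  Operators on S (x) B are given by their matrix elements
  U (i,m) (j,k) = <i|<m| U |j>|k>.\<close>

definition qubit_unitary :: "(nat \<Rightarrow> nat \<Rightarrow> complex) \<Rightarrow> bool" where
  "qubit_unitary V \<longleftrightarrow>
     (\<forall>i\<in>{0,1}. \<forall>j\<in>{0,1}. (\<Sum>k\<in>{0,1}. cnj (V k i) * V k j) = (if i = j then 1 else 0))"

definition copyU :: "(nat \<Rightarrow> nat \<Rightarrow> complex) \<Rightarrow> nat \<times> nat \<Rightarrow> nat \<times> nat \<Rightarrow> complex" where
  "copyU V = (\<lambda>(i, m) (j, k).
      (if i = 0 \<and> j = 0 \<and> m = 0 \<and> k = 0 then 1 else 0)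
      + (\<Sum>\<^sub>\<infinity>n\<in>{1..}. V i j * (if m = n - i \<and> k = n - j then 1 else 0)))"

text \<open>Kraus operators K^(n) = <n|_B U |beta>_B, as qubit matrices.\<close>
definition kraus :: "(nat \<times> nat \<Rightarrow> nat \<times> nat \<Rightarrow> complex) \<Rightarrow> (nat \<Rightarrow> complex) \<Rightarrow> nat
                     \<Rightarrow> nat \<Rightarrow> nat \<Rightarrow> complex" where
  "kraus U \<beta> n i j = (\<Sum>\<^sub>\<infinity>k. U (i, n) (j, k) * \<beta> k)"

definition tr_adj_mult :: "(nat \<Rightarrow> nat \<Rightarrow> complex) \<Rightarrow> (nat \<Rightarrow> nat \<Rightarrow> complex) \<Rightarrow> complex" where
  "tr_adj_mult V K = (\<Sum>i\<in>{0,1}. \<Sum>j\<in>{0,1}. cnj (V j i) * K j i)"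

definition choi_infidelity ::
  "(nat \<Rightarrow> nat \<Rightarrow> nat \<Rightarrow> complex) \<Rightarrow> (nat \<Rightarrow> nat \<Rightarrow> complex) \<Rightarrow> real" where
  "choi_infidelity K V = 1 - (1/4) * (\<Sum>\<^sub>\<infinity>n. (cmod (tr_adj_mult V (K n)))^2)"

definition Delta :: "complex \<Rightarrow> complex \<Rightarrow> (nat \<Rightarrow> nat \<Rightarrow> complex) \<Rightarrow> real" where
  "Delta b0 b1 V = (cmod b0)^2 + (cmod (V 0 1))^2 * ((cmod b1)^2 - Re (b0 * cnj b1))
      - (1/4) * (cmod (b0 * (cnj (V 0 0) + complex_of_real ((cmod (V 1 1))^2))
                       + b1 * complex_of_real ((cmod (V 0 1))^2)))^2"

end

theory Submission imports Defs begin

lemma infsum_single_pt: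
  fixes f :: "'a \<Rightarrow> 'b::{comm_monoid_add,t2_space}"
  assumes "k0 \<in> A" "\<And>k. k \<in> A \<Longrightarrow> k \<noteq> k0 \<Longrightarrow> f k = 0"
  shows "infsum f A = f k0"
  by (rule infsumI, rule has_sum_finite_neutralI[of "{k0}"]) (use assms in auto)

lemma copyU_eq:
  assumes "i \<le> 1"
  shows "copyU V (i,n) (j,k) = (if i=0 \<and> j=0 \<and> n=0 \<and> k=0 then 1 else 0)
      + (if 1 \<le> n+i \<and> k = n+i-j then V i j else 0)"
proof (cases "1 \<le> n+i")
  case True
  have "(\<Sum>\<^sub>\<infinity>n'\<in>{1..}. V i j * (if n = n' - i \<and> k = n' - j then 1 else 0))
     = V i j * (if n = (n+i) - i \<and> k = (n+i) - j then 1 else 0)"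
    by (rule infsum_single_pt) (use True assms in auto)
  then show ?thesis using True unfolding copyU_def by auto
next
  case False
  have "(\<Sum>\<^sub>\<infinity>n'\<in>{1..}. V i j * (if n = n' - i \<and> k = n' - j then 1 else (0::complex))) = 0"
    by (rule infsum_0) (use False assms in auto)
  then show ?thesis using False unfolding copyU_def by auto
qed

lemma kraus_Suc:
  assumes "i \<le> 1" "j \<le> 1"
  shows "kraus (copyU V) b (Suc m) i j = V i j * b (Suc m + i - j)"
proof -
  have "kraus (copyU V) b (Suc m) i j = copyU V (i, Suc m) (j, Suc m + i - j) * b (Suc m + i - j)"
    unfolding kraus_def by (rule infsum_single_pt) (use assms in \<open>auto simp: copyU_eq\<close>)
  then show ?thesis using assms by (simp add: copyU_eq)
qed

lemma kraus_0:
  "kraus (copyU V) b 0 0 0 = b 0" "kraus (copyU V) b 0 0 1 = 0"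
  "kraus (copyU V) b 0 1 0 = V 1 0 * b 1" "kraus (copyU V) b 0 1 1 = V 1 1 * b 0"
proof -
  show "kraus (copyU V) b 0 0 0 = b 0"
    unfolding kraus_def by (subst infsum_single_pt[of 0]) (auto simp: copyU_eq)
  show "kraus (copyU V) b 0 0 1 = 0"
    unfolding kraus_def by (rule infsum_0) (auto simp: copyU_eq)
  show "kraus (copyU V) b 0 1 0 = V 1 0 * b 1"
    unfolding kraus_def by (subst infsum_single_pt[of 1]) (auto simp: copyU_eq)
  show "kraus (copyU V) b 0 1 1 = V 1 1 * b 0"
    unfolding kraus_def by (subst infsum_single_pt[of 0]) (auto simp: copyU_eq)
qed

lemma cnj_mult_self: "cnj z * z = complex_of_real ((cmod z)^2)"
  by (metis complex_norm_square mult.commute of_real_power)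

lemma unitary_facts:
  assumes "qubit_unitary V"
  shows "(cmod (V 0 0))^2 + (cmod (V 1 0))^2 = 1" "(cmod (V 0 1))^2 + (cmod (V 1 1))^2 = 1"
        "(cmod (V 1 0))^2 = (cmod (V 0 1))^2"
proof -
  have e00: "cnj (V 0 0) * V 0 0 + cnj (V 1 0) * V 1 0 = 1"
    using assms unfolding qubit_unitary_def by (drule_tac x=0 in bspec, simp, drule_tac x=0 in bspec, auto)
  have e11: "cnj (V 0 1) * V 0 1 + cnj (V 1 1) * V 1 1 = 1"
    using assms unfolding qubit_unitary_def by (drule_tac x=1 in bspec, simp, drule_tac x=1 in bspec, auto)
  have e01: "cnj (V 0 0) * V 0 1 + cnj (V 1 0) * V 1 1 = 0"
    using assms unfolding qubit_unitary_def by (drule_tac x=0 in bspec, simp, drule_tac x=1 in bspec, auto)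
  show h1: "(cmod (V 0 0))^2 + (cmod (V 1 0))^2 = 1"
    using e00 unfolding cnj_mult_self by (metis of_real_add of_real_eq_1_iff)
  show h2: "(cmod (V 0 1))^2 + (cmod (V 1 1))^2 = 1"
    using e11 unfolding cnj_mult_self by (metis of_real_add of_real_eq_1_iff)
  have "cnj (V 0 0) * V 0 1 = - (cnj (V 1 0) * V 1 1)" using e01 by (simp add: eq_neg_iff_add_eq_0)
  then have "cmod (cnj (V 0 0) * V 0 1) = cmod (cnj (V 1 0) * V 1 1)" by simp
  then have "cmod (V 0 0) * cmod (V 0 1) = cmod (V 1 0) * cmod (V 1 1)" by (simp add: norm_mult)
  then have "(cmod (V 0 0))^2 * (cmod (V 0 1))^2 = (cmod (V 1 0))^2 * (cmod (V 1 1))^2"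
    by (metis power_mult_distrib)
  then show "(cmod (V 1 0))^2 = (cmod (V 0 1))^2" using h1 h2
    by (smt (verit, ccfv_threshold) mult.commute right_diff_distrib' mult_cancel_left2 diff_add_cancel)
qed


lemma mult_cnj_self: "z * cnj z = complex_of_real ((cmod z)^2)"
  by (metis complex_norm_square of_real_power)

lemma key_identity:
  fixes y z w :: complex and c :: real
  shows "(cmod (of_real (2*(1-c)) * y + of_real c * (w + z)))^2 / 4 =
    (cmod y)^2 - c * ((cmod (z - y))^2 - c/4 * (cmod (z + w - 2*y))^2)
    - c * ((cmod y)^2 - (cmod z)^2) - c * (Re (y * cnj z) - Re (w * cnj y))"
  by (simp only: cmod_power2) (simp add: power2_eq_square field_simps; algebra)

lemma T_Suc:
  assumes "qubit_unitary V"
  shows "tr_adj_mult V (kraus (copyU V) b (Suc m)) =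
    of_real (2*(1-(cmod (V 0 1))^2)) * b (Suc m) + of_real ((cmod (V 0 1))^2) * (b m + b (Suc (Suc m)))"
proof -
  note u = unitary_facts[OF assms]
  have "tr_adj_mult V (kraus (copyU V) b (Suc m)) =
     cnj (V 0 0) * V 0 0 * b (Suc m) + cnj (V 1 0) * V 1 0 * b (Suc (Suc m))
     + cnj (V 0 1) * V 0 1 * b m + cnj (V 1 1) * V 1 1 * b (Suc m)"
    unfolding tr_adj_mult_def by (simp add: kraus_Suc algebra_simps)
  also have "\<dots> = of_real ((cmod (V 0 0))^2) * b (Suc m) + of_real ((cmod (V 1 0))^2) * b (Suc (Suc m))
     + of_real ((cmod (V 0 1))^2) * b m + of_real ((cmod (V 1 1))^2) * b (Suc m)"
    by (simp add: cnj_mult_self)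
  also have "\<dots> = of_real (2*(1-(cmod (V 0 1))^2)) * b (Suc m) + of_real ((cmod (V 0 1))^2) * (b m + b (Suc (Suc m)))"
  proof -
    have a: "(cmod (V 0 0))^2 = 1 - (cmod (V 0 1))^2" "(cmod (V 1 1))^2 = 1 - (cmod (V 0 1))^2"
      "(cmod (V 1 0))^2 = (cmod (V 0 1))^2" using u by linarith+
    show ?thesis unfolding a by (simp add: algebra_simps)
  qed
  finally show ?thesis .
qed

lemma T_0:
  assumes "qubit_unitary V"
  shows "tr_adj_mult V (kraus (copyU V) b 0) =
    b 0 * (cnj (V 0 0) + complex_of_real ((cmod (V 1 1))^2)) + b 1 * complex_of_real ((cmod (V 0 1))^2)"
proof -
  note u = unitary_facts[OF assms]
  have "tr_adj_mult V (kraus (copyU V) b 0) =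
     cnj (V 0 0) * b 0 + cnj (V 1 0) * V 1 0 * b 1 + cnj (V 1 1) * V 1 1 * b 0"
    unfolding tr_adj_mult_def by (simp add: kraus_0[unfolded One_nat_def] algebra_simps)
  moreover have "(complex_of_real (cmod (V 1 0)))^2 = (complex_of_real (cmod (V 0 1)))^2"
    by (metis of_real_power u(3))
  ultimately show ?thesis by (simp add: cnj_mult_self algebra_simps mult_cnj_self)
qed


lemma sq_sum_le: "(u + v)^2 \<le> 2*u^2 + 2*(v::real)^2"
proof -
  have "0 \<le> (u - v)^2" by simp
  then show ?thesis by (simp add: power2_eq_square algebra_simps)
qed

lemma sq_sum3_le: "(x + y + 2*(z::real))^2 \<le> 3*(x^2 + y^2 + 4*z^2)"
proof -
  have "0 \<le> (x - y)^2 + (x - 2*z)^2 + (y - 2*z)^2" by simp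
  then show ?thesis by (simp add: power2_eq_square algebra_simps)
qed

lemma bound_e: "(cmod (z - y))^2 \<le> 2*(cmod z)^2 + 2*(cmod y)^2"
proof -
  have "cmod (z - y) \<le> cmod z + cmod y" by (rule norm_triangle_ineq4)
  then have "(cmod (z - y))^2 \<le> (cmod z + cmod y)^2" by (rule power_mono) simp
  then show ?thesis using sq_sum_le[of "cmod z" "cmod y"] by linarith
qed

lemma bound_d: "(cmod (z + w - 2*y))^2 \<le> 3*((cmod z)^2 + (cmod w)^2 + 4*(cmod y)^2)"
proof -
  have "cmod (z + w - 2*y) \<le> cmod (z + w) + cmod (2*y)" by (rule norm_triangle_ineq4)
  also have "\<dots> \<le> cmod z + cmod w + 2 * cmod y" using norm_triangle_ineq[of z w] by (simp add: norm_mult)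
  finally have "(cmod (z + w - 2*y))^2 \<le> (cmod z + cmod w + 2 * cmod y)^2" by (rule power_mono) simp
  then show ?thesis using sq_sum3_le[of "cmod z" "cmod w" "cmod y"] by linarith
qed

lemma bound_p: "\<bar>Re (x * cnj y)\<bar> \<le> (cmod x)^2 + (cmod y)^2"
proof -
  have "\<bar>Re (x * cnj y)\<bar> \<le> cmod x * cmod y" using abs_Re_le_cmod[of "x * cnj y"] by (simp add: norm_mult)
  moreover have "cmod x * cmod y \<le> (cmod x)^2 + (cmod y)^2"
  proof -
    have h: "0 \<le> (cmod x - cmod y)^2" by simp
    have "(cmod x - cmod y)^2 = (cmod x)^2 + (cmod y)^2 - 2 * (cmod x * cmod y)"
      by (simp add: power2_eq_square algebra_simps)
    then show ?thesis using h zero_le_power2[of "cmod x"] zero_le_power2[of "cmod y"] by linarith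
  qed
  ultimately show ?thesis by linarith
qed

lemma range_Suc_eq: "{1..} = range Suc"
  by (auto simp: image_iff dest!: Suc_le_D)

theorem mainTheorem5:
  fixes V :: "nat \<Rightarrow> nat \<Rightarrow> complex" and \<beta> :: "nat \<Rightarrow> complex"
  assumes "qubit_unitary V"
    and "((\<lambda>n. (cmod (\<beta> n))^2) has_sum 1) UNIV"
  shows "choi_infidelity (kraus (copyU V) \<beta>) V =
           (cmod (V 0 1))^2 *
             (\<Sum>\<^sub>\<infinity>n\<in>{1..}. (cmod (\<beta> (n+1) - \<beta> n))^2
                 - (cmod (V 0 1))^2 / 4 * (cmod (\<beta> (n+1) + \<beta> (n-1) - 2 * \<beta> n))^2)
           + Delta (\<beta> 0) (\<beta> 1) V"
proof -
  define a where "a n = (cmod (\<beta> n))^2" for n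
  define c where "c = (cmod (V 0 1))^2"
  define p where "p n = Re (\<beta> n * cnj (\<beta> (Suc n)))" for n
  define G where "G m = (cmod (\<beta> (Suc (Suc m)) - \<beta> (Suc m)))^2
     - c / 4 * (cmod (\<beta> (Suc (Suc m)) + \<beta> m - 2 * \<beta> (Suc m)))^2" for m
  define t where "t n = (cmod (tr_adj_mult V (kraus (copyU V) \<beta> n)))^2" for n
  note u = unitary_facts[OF assms(1)]
  have c0a: "0 \<le> c" unfolding c_def by simp
  have c1: "c \<le> 1" using u(2) zero_le_power2[of "cmod (V 1 1)"] unfolding c_def by linarith
  note c0 = c0a c1
  have asum: "a sums 1" using has_sum_imp_sums[OF assms(2)] unfolding a_def .
  have suma: "summable a" using asum by (rule sums_summable)
  have a0: "a \<longlonglongrightarrow> 0" using suma by (rule summable_LIMSEQ_zero)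
  have ann: "a n \<ge> 0" for n unfolding a_def by simp
  have sA: "(\<lambda>m. a (Suc m)) sums (1 - a 0)" using asum by (subst sums_Suc_iff) simp
  have sumaS: "summable (\<lambda>n. a (Suc n))" using suma by (simp add: summable_Suc_iff)
  have sumaSS: "summable (\<lambda>n. a (Suc (Suc n)))" using sumaS summable_Suc_iff[of "\<lambda>n. a (Suc n)"] by simp
  have "summable (\<lambda>n. a n + a (Suc n))" using suma sumaS by (rule summable_add)
  then have sump: "summable p"
    by (rule summable_comparison_test') (simp only: p_def a_def real_norm_def bound_p)
  have p0: "p \<longlonglongrightarrow> 0" using sump by (rule summable_LIMSEQ_zero)
  have tele1: "(\<lambda>m. a (Suc m) - a (Suc (Suc m))) sums (a (Suc 0) - 0)"
    by (rule telescope_sums'[of "\<lambda>m. a (Suc m)"]) (rule LIMSEQ_Suc[OF a0])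
  have tele2: "(\<lambda>m. p (Suc m) - p m) sums (0 - p 0)"
    by (rule telescope_sums[OF p0])
  have Gb: "norm (norm (G m)) \<le> 20 * (a m + a (Suc m) + a (Suc (Suc m)))" for m
  proof -
    define E where "E = (cmod (\<beta> (Suc (Suc m)) - \<beta> (Suc m)))^2"
    define D where "D = (cmod (\<beta> (Suc (Suc m)) + \<beta> m - 2 * \<beta> (Suc m)))^2"
    have GED: "G m = E - (c * D) / 4" unfolding G_def E_def D_def by simp
    have e: "0 \<le> E" "E \<le> 2 * a (Suc (Suc m)) + 2 * a (Suc m)"
      using bound_e unfolding a_def E_def by auto
    have d: "0 \<le> D" "D \<le> 3 * (a (Suc (Suc m)) + a m + 4 * a (Suc m))"
      using bound_d unfolding a_def D_def by auto
    have cd1: "c * D \<le> D" using c0 d(1) mult_right_mono[of c 1 D] by simp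
    have cd2: "0 \<le> c * D" using c0 d(1) by simp
    have G1: "G m \<le> 20 * (a m + a (Suc m) + a (Suc (Suc m)))"
      unfolding GED using e d ann[of m] ann[of "Suc m"] ann[of "Suc (Suc m)"] cd1 cd2 by (simp add: algebra_simps)
    have G2: "- G m \<le> 20 * (a m + a (Suc m) + a (Suc (Suc m)))"
      unfolding GED using e d ann[of m] ann[of "Suc m"] ann[of "Suc (Suc m)"] cd1 cd2 by (simp add: algebra_simps)
    show ?thesis using G1 G2 by (simp add: abs_le_iff)
  qed
  have sumnG: "summable (\<lambda>m. norm (G m))"
    by (rule summable_comparison_test'[OF _ Gb])
       (intro summable_mult summable_add suma sumaS sumaSS)
  have sumG: "summable G" using sumnG by (rule summable_norm_cancel)
  have sG: "G sums suminf G" using sumG by (rule summable_sums)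
  have ident: "t (Suc m) / 4 = a (Suc m) - c * G m - c * (a (Suc m) - a (Suc (Suc m))) - c * (p (Suc m) - p m)" for m
    unfolding t_def T_Suc[OF assms(1)] key_identity G_def a_def p_def c_def by simp
  have "(\<lambda>m. t (Suc m) / 4) sums ((1 - a 0) - c * suminf G - c * (a (Suc 0) - 0) - c * (0 - p 0))"
    unfolding ident by (intro sums_diff sums_mult sA sG tele1 tele2)
  note st4 = this
  then have "(\<lambda>m. t (Suc m)) sums (4 * ((1 - a 0) - c * suminf G - c * a 1 + c * p 0))"
    using sums_mult[OF st4, of 4] by (simp add: algebra_simps)
  then have "t sums (4 * ((1 - a 0) - c * suminf G - c * a 1 + c * p 0) + t 0)"
    by (simp add: sums_Suc_iff)
  then have "(t has_sum (4 * ((1 - a 0) - c * suminf G - c * a 1 + c * p 0) + t 0)) UNIV"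
    by (rule sums_nonneg_imp_has_sum) (simp add: t_def)
  then have inft: "infsum t UNIV = 4 * ((1 - a 0) - c * suminf G - c * a 1 + c * p 0) + t 0"
    by (rule infsumI)
  have "(G has_sum suminf G) UNIV" by (rule norm_summable_imp_has_sum[OF sumnG sG])
  then have infG: "infsum G UNIV = suminf G" by (rule infsumI)
  have "(\<Sum>\<^sub>\<infinity>n\<in>{1..}. (cmod (\<beta> (n+1) - \<beta> n))^2
                 - (cmod (V 0 1))^2 / 4 * (cmod (\<beta> (n+1) + \<beta> (n-1) - 2 * \<beta> n))^2)
        = infsum G UNIV"
    unfolding range_Suc_eq by (subst infsum_reindex) (auto simp: o_def G_def c_def intro!: infsum_cong)
  then have R: "(\<Sum>\<^sub>\<infinity>n\<in>{1..}. (cmod (\<beta> (n+1) - \<beta> n))^2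
                 - (cmod (V 0 1))^2 / 4 * (cmod (\<beta> (n+1) + \<beta> (n-1) - 2 * \<beta> n))^2)
        = suminf G" using infG by simp
  have t0: "t 0 = (cmod (\<beta> 0 * (cnj (V 0 0) + complex_of_real ((cmod (V 1 1))^2))
                       + \<beta> 1 * complex_of_real ((cmod (V 0 1))^2)))^2"
    unfolding t_def T_0[OF assms(1)] ..
  have "choi_infidelity (kraus (copyU V) \<beta>) V = 1 - 1/4 * infsum t UNIV"
    unfolding choi_infidelity_def t_def ..
  also have "\<dots> = c * suminf G + (a 0 + c * (a 1 - p 0) - 1/4 * t 0)"
    unfolding inft by (simp add: algebra_simps)
  finally show ?thesis unfolding R Delta_def t0 unfolding a_def c_def p_def by simp
qed

end
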